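(* Let $d\ge1$ and let $\mathcal H\neq\{0\}$ be a Hilbert space which is continuously embedded in $\mathscr S'(\mathbb R^d)$, and such that for some constant $C_0\ge 1$, for every $f\in\mathcal H$ and $x,\xi\in\mathbb R^d$, $e^{i\langle\cdot,\xi\rangle}f(\cdot-x)\in\mathcal H$ and $\|e^{i\langle\cdot,\xi\rangle}f(\cdot-x)\|_{\mathcal H}\le C_0\|f\|_{\mathcal H}$. Then there is a norm $|||\cdot|||$ on $\mathcal H$ such that: (1) $|||\cdot|||$ is equivalent to $\|\cdot\|_{\mathcal H}$; (2) $|||\cdot|||$ is a Hilbert norm (i.e. it arises from a scalar product); (3) $|||e^{i\langle\cdot,\xi\rangle}f(\cdot-x)|||=|||f|||$ for every $f\in\mathcal H$ and $x,\xi\in\mathbb R^d$.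
   Context: $\mathscr S'(\mathbb R^d)$ denotes the space of tempered distributions; $\langle\cdot,\cdot\rangle$ is the standard inner product on $\mathbb R^d$. *)

theory Defs
  imports "HOL-Analysis.Analysis"
begin

text \<open>Test functions and distributions live on real^'d (d = CARD('d) \<ge> 1), complex valued.\<close>

type_synonym 'd testfun = "real^'d \<Rightarrow> complex"
type_synonym 'd distr = "'d testfun \<Rightarrow> complex"

fun iter_pd :: "'d::finite list \<Rightarrow> 'd testfun \<Rightarrow> 'd testfun" where
  "iter_pd [] f = f"
| "iter_pd (i # is) f = (\<lambda>x. frechet_derivative (iter_pd is f) (at x) (axis i 1))"

definition schwartz :: "('d::finite) testfun \<Rightarrow> bool" where
  "schwartz \<phi> \<longleftrightarrow>
     (\<forall>l x. iter_pd l \<phi> differentiable (at x)) \<and>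
     (\<forall>l (N::nat). bounded (range (\<lambda>x. (1 + norm x) ^ N * norm (iter_pd l \<phi> x))))"

definition schwartz_seminorm :: "nat \<Rightarrow> nat \<Rightarrow> ('d::finite) testfun \<Rightarrow> real" where
  "schwartz_seminorm k N \<phi> =
     (SUP p \<in> {l. length l \<le> k} \<times> UNIV. (1 + norm (snd p)) ^ N * norm (iter_pd (fst p) \<phi> (snd p)))"

text \<open>Tempered distributions: continuous linear functionals on the Schwartz space,
  represented extensionally (value 0 outside the Schwartz space).\<close>
definition tempered :: "('d::finite) distr \<Rightarrow> bool" where
  "tempered T \<longleftrightarrow>
     (\<forall>\<phi>. \<not> schwartz \<phi> \<longrightarrow> T \<phi> = 0) \<and>
     (\<forall>\<phi> \<psi>. schwartz \<phi> \<longrightarrow> schwartz \<psi> \<longrightarrow> T (\<lambda>x. \<phi> x + \<psi> x) = T \<phi> + T \<psi>) \<and>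
     (\<forall>c \<phi>. schwartz \<phi> \<longrightarrow> T (\<lambda>x. c * \<phi> x) = c * T \<phi>) \<and>
     (\<exists>C k N. \<forall>\<phi>. schwartz \<phi> \<longrightarrow> norm (T \<phi>) \<le> C * schwartz_seminorm k N \<phi>)"

text \<open>The time-frequency shift  f \<mapsto> e^{i<.,\<xi>>} f(. - x)  on distributions:
  <e^{i<.,\<xi>>} f(.-x), \<phi>> = <f, \<lambda>s. e^{i<s+x,\<xi>>} \<phi>(s+x)>.\<close>
definition tf_shift :: "real^'d \<Rightarrow> real^'d \<Rightarrow> ('d::finite) distr \<Rightarrow> 'd distr" where
  "tf_shift x \<xi> T = (\<lambda>\<phi>. if schwartz \<phi>
       then T (\<lambda>s. exp (\<i> * complex_of_real (inner (s + x) \<xi>)) * \<phi> (s + x)) else 0)"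

definition inner_product_on :: "'d distr set \<Rightarrow> ('d distr \<Rightarrow> 'd distr \<Rightarrow> complex) \<Rightarrow> bool" where
  "inner_product_on H ip \<longleftrightarrow>
     (\<forall>f\<in>H. \<forall>g\<in>H. \<forall>h\<in>H. ip (\<lambda>\<phi>. f \<phi> + g \<phi>) h = ip f h + ip g h) \<and>
     (\<forall>c. \<forall>f\<in>H. \<forall>g\<in>H. ip (\<lambda>\<phi>. c * f \<phi>) g = c * ip f g) \<and>
     (\<forall>f\<in>H. \<forall>g\<in>H. ip g f = cnj (ip f g)) \<and>
     (\<forall>f\<in>H. f \<noteq> (\<lambda>\<phi>. 0) \<longrightarrow> Re (ip f f) > 0)"

definition ip_norm :: "('d distr \<Rightarrow> 'd distr \<Rightarrow> complex) \<Rightarrow> 'd distr \<Rightarrow> real" where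
  "ip_norm ip f = sqrt (Re (ip f f))"

definition hilbert_space_on :: "'d distr set \<Rightarrow> ('d distr \<Rightarrow> 'd distr \<Rightarrow> complex) \<Rightarrow> bool" where
  "hilbert_space_on H ip \<longleftrightarrow>
     (\<lambda>\<phi>. 0) \<in> H \<and>
     (\<forall>f\<in>H. \<forall>g\<in>H. (\<lambda>\<phi>. f \<phi> + g \<phi>) \<in> H) \<and>
     (\<forall>c. \<forall>f\<in>H. (\<lambda>\<phi>. c * f \<phi>) \<in> H) \<and>
     inner_product_on H ip \<and>
     (\<forall>s::nat \<Rightarrow> 'd distr. (\<forall>n. s n \<in> H) \<longrightarrow>
        (\<forall>e>0. \<exists>M. \<forall>m\<ge>M. \<forall>n\<ge>M. ip_norm ip (\<lambda>\<phi>. s m \<phi> - s n \<phi>) < e) \<longrightarrow>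
        (\<exists>f\<in>H. (\<lambda>n. ip_norm ip (\<lambda>\<phi>. s n \<phi> - f \<phi>)) \<longlonglongrightarrow> 0))"

text \<open>Continuous embedding of (H, ip) into S' (weak-* topology; for a Banach space this is
  equivalent to continuity into the strong topology).\<close>
definition cont_embedded_S' :: "('d::finite) distr set \<Rightarrow> ('d distr \<Rightarrow> 'd distr \<Rightarrow> complex) \<Rightarrow> bool" where
  "cont_embedded_S' H ip \<longleftrightarrow>
     (\<forall>f\<in>H. tempered f) \<and>
     (\<forall>\<phi>. schwartz \<phi> \<longrightarrow> (\<exists>C. \<forall>f\<in>H. norm (f \<phi>) \<le> C * ip_norm ip f))"

end

theory Submission
  imports Defs
begin


definition modf :: "real^'d \<Rightarrow> real^'d \<Rightarrow> complex" where
  "modf \<xi> s = exp (\<i> * complex_of_real (inner s \<xi>))"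

lemma norm_modf [simp]: "norm (modf \<xi> s) = 1"
  unfolding modf_def by simp

lemma modf_deriv:
  fixes \<xi> s :: "real^'d::finite"
  shows "(modf \<xi> has_derivative (\<lambda>v. modf \<xi> s * (\<i> * complex_of_real (inner v \<xi>)))) (at s)"
proof -
  have "((\<lambda>s::real^'d. \<i> * complex_of_real (inner s \<xi>)) has_derivative (\<lambda>v. \<i> * complex_of_real (inner v \<xi>))) (at s)"
    by (auto intro!: derivative_eq_intros)
  from has_derivative_compose[OF this DERIV_exp[THEN has_field_derivative_imp_has_derivative]]
  show ?thesis by (simp add: modf_def[abs_def])
qed

definition lc :: "('d::finite) testfun \<Rightarrow> (complex \<times> 'd list) list \<Rightarrow> 'd testfun" where
  "lc \<phi> ps = (\<lambda>s. \<Sum>p\<leftarrow>ps. fst p * iter_pd (snd p) \<phi> s)"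

lemma lc_deriv:
  assumes "\<And>l x. iter_pd l \<phi> differentiable (at x)"
  shows "(lc \<phi> ps has_derivative
          (\<lambda>v. \<Sum>p\<leftarrow>ps. fst p * frechet_derivative (iter_pd (snd p) \<phi>) (at s) v)) (at s)"
proof (induction ps)
  case Nil
  then show ?case by (simp add: lc_def)
next
  case (Cons p ps)
  have "((\<lambda>s. fst p * iter_pd (snd p) \<phi> s) has_derivative
     (\<lambda>v. fst p * frechet_derivative (iter_pd (snd p) \<phi>) (at s) v)) (at s)"
    using assms frechet_derivative_works has_derivative_mult_right by blast
  from has_derivative_add[OF this Cons.IH] show ?case
    by (simp add: lc_def)
qed

lemma lc_differentiable:
  assumes "\<And>l x. iter_pd l \<phi> differentiable (at x)"
  shows "lc \<phi> ps differentiable (at s)"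
  using lc_deriv[OF assms] differentiableI by blast

lemma mod_iter:
  assumes diff: "\<And>l x. iter_pd l \<phi> differentiable (at x)"
  shows "\<exists>ps. iter_pd l (\<lambda>s. modf \<xi> s * \<phi> s) = (\<lambda>s. modf \<xi> s * lc \<phi> ps s)"
proof (induction l)
  case Nil
  show ?case by (rule exI[of _ "[(1, [])]"]) (simp add: lc_def)
next
  case (Cons i l)
  then obtain ps where ps: "iter_pd l (\<lambda>s. modf \<xi> s * \<phi> s) = (\<lambda>s. modf \<xi> s * lc \<phi> ps s)"
    by blast
  define ps' where "ps' = map (\<lambda>p. (fst p, i # snd p)) ps @
     map (\<lambda>p. (\<i> * complex_of_real (\<xi> $ i) * fst p, snd p)) ps"
  have "iter_pd (i # l) (\<lambda>s. modf \<xi> s * \<phi> s) x = modf \<xi> x * lc \<phi> ps' x" for x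
  proof -
    have D: "((\<lambda>s. modf \<xi> s * lc \<phi> ps s) has_derivative
      (\<lambda>v. modf \<xi> x * (\<Sum>p\<leftarrow>ps. fst p * frechet_derivative (iter_pd (snd p) \<phi>) (at x) v)
         + modf \<xi> x * (\<i> * complex_of_real (inner v \<xi>)) * lc \<phi> ps x)) (at x)"
      by (rule has_derivative_mult[OF modf_deriv lc_deriv[OF diff]])
    have "iter_pd (i # l) (\<lambda>s. modf \<xi> s * \<phi> s) x =
        frechet_derivative (\<lambda>s. modf \<xi> s * lc \<phi> ps s) (at x) (axis i 1)"
      by (simp add: ps)
    also have "\<dots> = modf \<xi> x * (\<Sum>p\<leftarrow>ps. fst p * iter_pd (i # snd p) \<phi> x)
         + modf \<xi> x * (\<i> * complex_of_real (\<xi> $ i)) * lc \<phi> ps x"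
      by (simp add: frechet_derivative_at[OF D, symmetric] inner_axis')
    also have "\<dots> = modf \<xi> x * lc \<phi> ps' x"
      by (simp add: lc_def ps'_def o_def sum_list_const_mult distrib_left mult.assoc)
    finally show ?thesis .
  qed
  then show ?case by blast
qed

lemma schwartz_bounds:
  "schwartz \<phi> \<Longrightarrow> \<exists>B. \<forall>x. (1 + norm x) ^ N * norm (iter_pd l \<phi> x) \<le> B"
  unfolding schwartz_def bounded_iff by fastforce

lemma schwartz_intro:
  assumes "\<And>l x. iter_pd l \<phi> differentiable (at x)"
    and "\<And>l N. \<exists>B. \<forall>x. (1 + norm x) ^ N * norm (iter_pd l \<phi> x) \<le> B"
  shows "schwartz \<phi>"
  unfolding schwartz_def bounded_iff
proof (intro conjI allI)
  fix l N
  obtain B where "\<forall>x. (1 + norm x) ^ N * norm (iter_pd l \<phi> x) \<le> B" using assms(2) by blast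
  then show "\<exists>a. \<forall>y\<in>range (\<lambda>x. (1 + norm x) ^ N * norm (iter_pd l \<phi> x)). norm y \<le> a"
    by (intro exI[of _ B]) auto
qed (use assms(1) in auto)

lemma lc_bound:
  assumes "schwartz \<phi>"
  shows "\<exists>B. \<forall>x. (1 + norm x) ^ N * norm (lc \<phi> ps x) \<le> B"
proof (induction ps)
  case Nil
  then show ?case by (auto simp: lc_def)
next
  case (Cons p ps)
  then obtain B where B: "\<forall>x. (1 + norm x) ^ N * norm (lc \<phi> ps x) \<le> B" by blast
  obtain B' where B': "\<forall>x. (1 + norm x) ^ N * norm (iter_pd (snd p) \<phi> x) \<le> B'"
    using schwartz_bounds[OF assms] by blast
  have "(1 + norm x) ^ N * norm (lc \<phi> (p # ps) x) \<le> norm (fst p) * B' + B" for x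
  proof -
    have w: "0 \<le> (1 + norm x) ^ N" by simp
    have "norm (lc \<phi> (p # ps) x) \<le> norm (fst p) * norm (iter_pd (snd p) \<phi> x) + norm (lc \<phi> ps x)"
      by (simp add: lc_def norm_mult[symmetric] norm_triangle_ineq)
    then have "(1 + norm x) ^ N * norm (lc \<phi> (p # ps) x) \<le>
      (1 + norm x) ^ N * (norm (fst p) * norm (iter_pd (snd p) \<phi> x) + norm (lc \<phi> ps x))"
      by (rule mult_left_mono[OF _ w])
    also have "\<dots> = norm (fst p) * ((1 + norm x) ^ N * norm (iter_pd (snd p) \<phi> x)) + (1 + norm x) ^ N * norm (lc \<phi> ps x)"
      by (simp add: algebra_simps)
    also have "\<dots> \<le> norm (fst p) * B' + B"
      using B B' by (intro add_mono mult_left_mono) auto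
    finally show ?thesis .
  qed
  then show ?case by blast
qed

lemma schwartz_mod:
  assumes "schwartz \<phi>"
  shows "schwartz (\<lambda>s. modf \<xi> s * \<phi> s)"
proof (rule schwartz_intro)
  have diff: "\<And>l x. iter_pd l \<phi> differentiable (at x)" using assms schwartz_def by blast
  fix l
  obtain ps where ps: "iter_pd l (\<lambda>s. modf \<xi> s * \<phi> s) = (\<lambda>s. modf \<xi> s * lc \<phi> ps s)"
    using mod_iter[OF diff] by blast
  show "iter_pd l (\<lambda>s. modf \<xi> s * \<phi> s) differentiable (at x)" for x
    unfolding ps using has_derivative_mult[OF modf_deriv lc_deriv[OF diff]] differentiableI by blast
  show "\<exists>B. \<forall>x. (1 + norm x) ^ N * norm (iter_pd l (\<lambda>s. modf \<xi> s * \<phi> s) x) \<le> B" for N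
    unfolding ps using lc_bound[OF assms] by (simp add: norm_mult)
qed

lemma fd_trans:
  assumes "h differentiable (at (s + x))"
  shows "((\<lambda>s. h (s + x)) has_derivative frechet_derivative h (at (s + x))) (at s)"
proof -
  have "((\<lambda>s. s + x) has_derivative (\<lambda>v. v)) (at s)"
    by (auto intro!: derivative_eq_intros)
  from has_derivative_compose[OF this assms[unfolded frechet_derivative_works]]
  show ?thesis by simp
qed

lemma trans_iter:
  assumes diff: "\<And>l x. iter_pd l g differentiable (at x)"
  shows "iter_pd l (\<lambda>s. g (s + x)) = (\<lambda>s. iter_pd l g (s + x))"
proof (induction l)
  case Nil
  then show ?case by simp
next
  case (Cons i l)
  show ?case
    by (rule ext) (simp add: Cons.IH frechet_derivative_at[OF fd_trans[OF diff], symmetric])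
qed

lemma schwartz_trans:
  assumes "schwartz g"
  shows "schwartz (\<lambda>s. g (s + x))"
proof (rule schwartz_intro)
  have diff: "\<And>l x. iter_pd l g differentiable (at x)" using assms schwartz_def by blast
  fix l
  show "iter_pd l (\<lambda>s. g (s + x)) differentiable (at y)" for y
    unfolding trans_iter[OF diff] using fd_trans[OF diff] differentiableI by blast
  fix N
  obtain B where B: "\<forall>y. (1 + norm y) ^ N * norm (iter_pd l g y) \<le> B"
    using schwartz_bounds[OF assms] by blast
  have "(1 + norm y) ^ N * norm (iter_pd l g (y + x)) \<le> (1 + norm x) ^ N * B" for y
  proof -
    have "1 + norm y \<le> (1 + norm x) * (1 + norm (y + x))"
    proof -
      have t: "norm y \<le> norm (y + x) + norm x"
        using norm_triangle_ineq4[of "y + x" x] by simp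
      have p: "0 \<le> norm x * norm (y + x)" by simp
      have e: "(1 + norm x) * (1 + norm (y + x)) = 1 + norm x + norm (y + x) + norm x * norm (y + x)"
        by (simp add: algebra_simps)
      show ?thesis unfolding e using t p by linarith
    qed
    then have "(1 + norm y) ^ N \<le> ((1 + norm x) * (1 + norm (y + x))) ^ N"
      by (intro power_mono) auto
    then have "(1 + norm y) ^ N * norm (iter_pd l g (y + x)) \<le>
       (1 + norm x) ^ N * ((1 + norm (y + x)) ^ N * norm (iter_pd l g (y + x)))"
      by (metis mult.assoc mult_right_mono norm_ge_zero power_mult_distrib)
    also have "\<dots> \<le> (1 + norm x) ^ N * B"
      using B by (intro mult_left_mono) auto
    finally show ?thesis .
  qed
  then show "\<exists>B. \<forall>y. (1 + norm y) ^ N * norm (iter_pd l (\<lambda>s. g (s + x)) y) \<le> B"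
    unfolding trans_iter[OF diff] by blast
qed

lemma schwartz_tf:
  assumes "schwartz \<phi>"
  shows "schwartz (\<lambda>s. exp (\<i> * complex_of_real (inner (s + x) \<xi>)) * \<phi> (s + x))"
  using schwartz_trans[OF schwartz_mod[OF assms, of \<xi>], of x] by (simp add: modf_def)



definition avgop :: "'g::real_vector \<Rightarrow> nat \<Rightarrow> ('g \<Rightarrow> 'b::real_normed_vector) \<Rightarrow> 'g \<Rightarrow> 'b" where
  "avgop w n u = (\<lambda>z. (1 / real n) *\<^sub>R (\<Sum>k<n. u (z + real k *\<^sub>R w)))"

fun iavg :: "'g::real_vector list \<Rightarrow> nat \<Rightarrow> ('g \<Rightarrow> 'b::real_normed_vector) \<Rightarrow> 'g \<Rightarrow> 'b" where
  "iavg [] n u = u"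
| "iavg (w # ws) n u = avgop w n (iavg ws n u)"

lemma iavg_add: "iavg ws n (\<lambda>z. u z + v z) = (\<lambda>z. iavg ws n u z + iavg ws n v z)"
  by (induction ws) (auto simp: avgop_def sum.distrib scaleR_add_right)

lemma iavg_diff: "iavg ws n (\<lambda>z. u z - v z) = (\<lambda>z. iavg ws n u z - iavg ws n v z)"
  by (induction ws) (auto simp: avgop_def sum_subtractf scaleR_diff_right)

lemma iavg_linear:
  assumes "bounded_linear h"
  shows "iavg ws n (\<lambda>z. h (u z)) = (\<lambda>z. h (iavg ws n u z))"
proof (induction ws)
  case Nil
  then show ?case by simp
next
  case (Cons w ws)
  interpret h: bounded_linear h by fact
  show ?case by (simp add: Cons.IH avgop_def h.sum h.scaleR)
qed

lemma avgop_bound: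
  assumes "\<And>z. norm (u z) \<le> B" "0 \<le> B"
  shows "norm (avgop w n u z) \<le> B"
proof (cases "n = 0")
  case True
  then show ?thesis using assms by (simp add: avgop_def)
next
  case False
  have "norm (\<Sum>k<n. u (z + real k *\<^sub>R w)) \<le> (\<Sum>k<n. B)"
    by (rule sum_norm_le) (use assms in auto)
  then have "norm (\<Sum>k<n. u (z + real k *\<^sub>R w)) \<le> real n * B" by simp
  then show ?thesis using False
    by (simp add: avgop_def field_simps)
qed

lemma iavg_bound:
  assumes "\<And>z. norm (u z) \<le> B" "0 \<le> B"
  shows "norm (iavg ws n u z) \<le> B"
  using assms by (induction ws arbitrary: z) (auto intro!: avgop_bound)

lemma iavg_lower:
  fixes u :: "'g::real_vector \<Rightarrow> real"
  assumes "\<And>z. a \<le> u z" "0 < n"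
  shows "a \<le> iavg ws n u z"
proof (induction ws arbitrary: z)
  case Nil
  then show ?case using assms by simp
next
  case (Cons w ws)
  have "(\<Sum>k<n. a) \<le> (\<Sum>k<n. iavg ws n u (z + real k *\<^sub>R w))"
    by (rule sum_mono) (use Cons in auto)
  then have "real n * a \<le> (\<Sum>k<n. iavg ws n u (z + real k *\<^sub>R w))" by simp
  then show ?case using assms(2) by (simp add: avgop_def field_simps)
qed

lemma iavg_upper:
  fixes u :: "'g::real_vector \<Rightarrow> real"
  assumes "\<And>z. u z \<le> b" "0 < n"
  shows "iavg ws n u z \<le> b"
proof (induction ws arbitrary: z)
  case Nil
  then show ?case using assms by simp
next
  case (Cons w ws)
  have "(\<Sum>k<n. iavg ws n u (z + real k *\<^sub>R w)) \<le> (\<Sum>k<n. b)"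
    by (rule sum_mono) (use Cons in auto)
  then have "(\<Sum>k<n. iavg ws n u (z + real k *\<^sub>R w)) \<le> real n * b" by simp
  then show ?case using assms(2) by (simp add: avgop_def field_simps)
qed

lemma iavg_shift: "iavg ws n (\<lambda>z. u (z + w)) = (\<lambda>z. iavg ws n u (z + w))"
  by (induction ws) (auto simp: avgop_def add_ac)

lemma iavg_inv:
  assumes "w \<in> set ws" "0 < n" "\<And>z. norm (u z) \<le> B"
  shows "norm (iavg ws n (\<lambda>z. u (z + w)) z - iavg ws n u z) \<le> 2 * B / real n"
  using assms(1)
proof (induction ws arbitrary: z)
  case Nil
  then show ?case by simp
next
  case (Cons w' ws)
  have B0: "0 \<le> B" using assms(3)[of 0] norm_ge_zero order_trans by blast
  show ?case
  proof (cases "w' = w")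
    case True
    define v where "v = iavg ws n u"
    have vb: "norm (v y) \<le> B" for y unfolding v_def by (rule iavg_bound[OF assms(3) B0])
    have "iavg (w' # ws) n (\<lambda>z. u (z + w)) z - iavg (w' # ws) n u z
       = (1 / real n) *\<^sub>R (\<Sum>k<n. v (z + real (Suc k) *\<^sub>R w) - v (z + real k *\<^sub>R w))"
      by (simp add: True iavg_shift avgop_def v_def sum_subtractf scaleR_diff_right
          scaleR_add_left add_ac)
    also have "\<dots> = (1 / real n) *\<^sub>R (v (z + real n *\<^sub>R w) - v (z + real 0 *\<^sub>R w))"
      by (subst sum_lessThan_telescope) simp
    finally have eq: "iavg (w' # ws) n (\<lambda>z. u (z + w)) z - iavg (w' # ws) n u z =
        (1 / real n) *\<^sub>R (v (z + real n *\<^sub>R w) - v (z + real 0 *\<^sub>R w))" .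
    have "norm (v (z + real n *\<^sub>R w) - v (z + real 0 *\<^sub>R w)) \<le> B + B"
      by (rule order_trans[OF norm_triangle_ineq4 add_mono[OF vb vb]])
    then show ?thesis unfolding eq norm_scaleR using assms(2) by (simp add: field_simps)
  next
    case False
    then have w: "w \<in> set ws" using Cons.prems by simp
    have "iavg (w' # ws) n (\<lambda>z. u (z + w)) z - iavg (w' # ws) n u z
        = avgop w' n (\<lambda>y. iavg ws n (\<lambda>z. u (z + w)) y - iavg ws n u y) z"
      by (simp add: avgop_def sum_subtractf scaleR_diff_right)
    also have "norm \<dots> \<le> 2 * B / real n"
      by (rule avgop_bound) (use Cons.IH[OF w] B0 assms(2) in auto)
    finally show ?thesis .
  qed
qed

subsection \<open>Ultrafilters\<close>

lemma ex_ultra: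
  fixes F :: "'a filter"
  assumes F: "F \<noteq> bot"
  shows "\<exists>U. U \<le> F \<and> U \<noteq> bot \<and> (\<forall>P. eventually P U \<or> eventually (\<lambda>x. \<not> P x) U)"
proof -
  let ?R = "{(b, a). a \<noteq> bot \<and> a \<le> b \<and> b \<le> F}"
  have bot_notin_R: "c \<in> Chains ?R \<Longrightarrow> bot \<notin> c" for c
    by (auto simp: Chains_def)
  have [simp]: "Field ?R = {G. G \<noteq> bot \<and> G \<le> F}"
    by (auto simp: Field_def bot_unique)
  have "\<exists>m\<in>Field ?R. \<forall>a\<in>Field ?R. (m, a) \<in> ?R \<longrightarrow> a = m"
  proof (rule Zorns_po_lemma)
    show "Partial_order ?R"
      by (auto simp: partial_order_on_def preorder_on_def
          antisym_def refl_on_def trans_def Field_def bot_unique)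
    show "\<exists>u\<in>Field ?R. \<forall>a\<in>C. (a, u) \<in> ?R" if C: "C \<in> Chains ?R" for C
    proof (simp, intro exI conjI ballI)
      have Inf_C: "Inf C \<noteq> bot" "Inf C \<le> F" if "C \<noteq> {}"
      proof -
        from C that have "Inf C = bot \<longleftrightarrow> (\<exists>x\<in>C. x = bot)"
          unfolding trivial_limit_def by (intro eventually_Inf_base) (auto simp: Chains_def)
        with C show "Inf C \<noteq> bot"
          by (simp add: bot_notin_R)
        from that obtain x where "x \<in> C" by auto
        with C show "Inf C \<le> F"
          by (auto intro!: Inf_lower2[of x] simp: Chains_def)
      qed
      then have [simp]: "inf F (Inf C) = (if C = {} then F else Inf C)"
        using C by (auto simp add: inf_absorb2)
      from C show "inf F (Inf C) \<noteq> bot"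
        by (simp add: F Inf_C)
      from C show "inf F (Inf C) \<le> F"
        by (simp add: Chains_def Inf_C F)
      with C show "inf F (Inf C) \<le> x" "x \<le> F" if "x \<in> C" for x
        using that  by (auto intro: Inf_lower simp: Chains_def)
    qed
  qed
  then obtain U where U: "U \<noteq> bot" "U \<le> F" and max: "\<And>G. G \<noteq> bot \<Longrightarrow> G \<le> U \<Longrightarrow> G = U"
    by auto
  have "eventually P U \<or> eventually (\<lambda>x. \<not> P x) U" for P
  proof (rule disjCI)
    assume "\<not> eventually (\<lambda>x. \<not> P x) U"
    then have "inf U (principal {x. P x}) \<noteq> bot"
      by (simp add: trivial_limit_def eventually_inf_principal not_eventually)
    then have E: "inf U (principal {x. P x}) = U"
      by (rule max) simp
    have "eventually P (inf U (principal {x. P x}))"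
      by (simp add: eventually_inf_principal)
    then show "eventually P U"
      by (simp only: E)
  qed
  with U show ?thesis by blast
qed

definition upset :: "'g list \<times> nat \<Rightarrow> ('g list \<times> nat) set" where
  "upset i = {j. set (fst i) \<subseteq> set (fst j) \<and> snd i \<le> snd j}"

definition Fidx :: "('g list \<times> nat) filter" where
  "Fidx = (INF i. principal (upset i))"

lemma eventually_Fidx: "eventually P Fidx \<longleftrightarrow> (\<exists>i. \<forall>j\<in>upset i. P j)"
  unfolding Fidx_def
proof (subst eventually_INF_base)
  show "\<And>a b. a \<in> UNIV \<Longrightarrow> b \<in> UNIV \<Longrightarrow>
      \<exists>x\<in>UNIV. principal (upset x) \<le> inf (principal (upset a)) (principal (upset b))"
    by (rule_tac x="(fst a @ fst b, max (snd a) (snd b))" in bexI) (auto simp: upset_def)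
qed (auto simp: eventually_principal)

lemma Fidx_nonbot: "Fidx \<noteq> bot"
  unfolding trivial_limit_def eventually_Fidx upset_def by auto

definition theU :: "('g list \<times> nat) filter" where
  "theU = (SOME U. U \<le> Fidx \<and> U \<noteq> bot \<and> (\<forall>P. eventually P U \<or> eventually (\<lambda>x. \<not> P x) U))"

lemma theU:
  shows theU_le: "theU \<le> Fidx" and theU_nonbot: "theU \<noteq> bot"
    and theU_ultra: "eventually P theU \<or> eventually (\<lambda>x. \<not> P x) theU"
  using someI_ex[OF ex_ultra[OF Fidx_nonbot]] unfolding theU_def by blast+

lemma eventually_theU_idx: "eventually (\<lambda>i. w \<in> set (fst i) \<and> N \<le> snd i) theU"
proof -
  have "eventually (\<lambda>i. w \<in> set (fst i) \<and> N \<le> snd i) Fidx"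
    unfolding eventually_Fidx by (rule exI[of _ "([w], N)"]) (auto simp: upset_def)
  then show ?thesis using theU_le filter_leD by blast
qed

lemma eventually_theU_pos: "eventually (\<lambda>i. 0 < snd i) theU"
  using eventually_theU_idx[of _ 1] by (rule eventually_mono) auto

lemma ultra_lim:
  fixes g :: "'g list \<times> nat \<Rightarrow> 'b::{real_normed_vector,heine_borel}"
  assumes "eventually (\<lambda>i. norm (g i) \<le> B) theU"
  shows "\<exists>L. (g \<longlongrightarrow> L) theU"
proof -
  have "compact (cball (0::'b) B)" by simp
  moreover have "filtermap g theU \<noteq> bot" using theU_nonbot by (simp add: filtermap_bot_iff)
  moreover have "eventually (\<lambda>x. x \<in> cball 0 B) (filtermap g theU)"
    using assms by (simp add: eventually_filtermap)
  ultimately obtain x where x: "inf (nhds x) (filtermap g theU) \<noteq> bot"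
    unfolding compact_filter by blast
  have "(g \<longlongrightarrow> x) theU"
  proof (rule topological_tendstoI)
    fix S assume S: "open S" "x \<in> S"
    show "eventually (\<lambda>i. g i \<in> S) theU"
    proof (rule ccontr)
      assume "\<not> eventually (\<lambda>i. g i \<in> S) theU"
      then have "eventually (\<lambda>i. g i \<notin> S) theU" using theU_ultra by blast
      then have "eventually (\<lambda>y. y \<notin> S) (filtermap g theU)" by (simp add: eventually_filtermap)
      moreover have "eventually (\<lambda>y. y \<in> S) (nhds x)" using S eventually_nhds by blast
      ultimately have "eventually (\<lambda>_. False) (inf (nhds x) (filtermap g theU))"
        unfolding eventually_inf by blast
      then show False using x trivial_limit_def by blast
    qed
  qed
  then show ?thesis by blast
qed

subsection \<open>The invariant mean\<close>

definition bdd_fun :: "('g \<Rightarrow> 'b::real_normed_vector) \<Rightarrow> bool" where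
  "bdd_fun u \<longleftrightarrow> (\<exists>B. \<forall>z. norm (u z) \<le> B)"

definition mean :: "('g::real_vector \<Rightarrow> 'b::{real_normed_vector,heine_borel}) \<Rightarrow> 'b" where
  "mean u = Lim theU (\<lambda>i. iavg (fst i) (snd i) u 0)"

lemma mean_tendsto:
  assumes "bdd_fun u"
  shows "((\<lambda>i. iavg (fst i) (snd i) u 0) \<longlongrightarrow> mean u) theU"
proof -
  obtain B where B: "\<And>z. norm (u z) \<le> B" using assms bdd_fun_def by blast
  have B0: "0 \<le> B" using B[of 0] norm_ge_zero order_trans by blast
  have "eventually (\<lambda>i. norm (iavg (fst i) (snd i) u 0) \<le> B) theU"
    using iavg_bound[of u B, OF B B0] by simp
  from ultra_lim[OF this] obtain L where L: "((\<lambda>i. iavg (fst i) (snd i) u 0) \<longlongrightarrow> L) theU"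
    by blast
  then have "mean u = L" unfolding mean_def using theU_nonbot by (intro tendsto_Lim) auto
  with L show ?thesis by simp
qed

lemma mean_eqI:
  "((\<lambda>i. iavg (fst i) (snd i) u 0) \<longlongrightarrow> L) theU \<Longrightarrow> mean u = L"
  unfolding mean_def using theU_nonbot by (intro tendsto_Lim) auto

lemma mean_add:
  assumes "bdd_fun u" "bdd_fun v"
  shows "mean (\<lambda>z. u z + v z) = mean u + mean v"
  by (rule mean_eqI) (use tendsto_add[OF mean_tendsto[OF assms(1)] mean_tendsto[OF assms(2)]] in
      \<open>simp add: iavg_add\<close>)

lemma mean_linear:
  assumes "bdd_fun u" "bounded_linear h"
  shows "mean (\<lambda>z. h (u z)) = h (mean u)"
  by (rule mean_eqI)
    (use bounded_linear.tendsto[OF assms(2) mean_tendsto[OF assms(1)]] in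
      \<open>simp add: iavg_linear[OF assms(2)]\<close>)

lemma mean_lower:
  fixes u :: "'g::real_vector \<Rightarrow> real"
  assumes "bdd_fun u" "\<And>z. a \<le> u z"
  shows "a \<le> mean u"
  by (rule tendsto_lowerbound[OF mean_tendsto[OF assms(1)] _ theU_nonbot])
    (use eventually_theU_pos in \<open>rule eventually_mono, intro iavg_lower assms(2), auto\<close>)

lemma mean_upper:
  fixes u :: "'g::real_vector \<Rightarrow> real"
  assumes "bdd_fun u" "\<And>z. u z \<le> b"
  shows "mean u \<le> b"
  by (rule tendsto_upperbound[OF mean_tendsto[OF assms(1)] _ theU_nonbot])
    (use eventually_theU_pos in \<open>rule eventually_mono, intro iavg_upper assms(2), auto\<close>)

lemma mean_shift:
  fixes u :: "'g::real_vector \<Rightarrow> 'b::{real_normed_vector,heine_borel}"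
  assumes "bdd_fun u"
  shows "mean (\<lambda>z. u (z + w)) = mean u"
proof -
  obtain B where B: "\<And>z. norm (u z) \<le> B" using assms bdd_fun_def by blast
  let ?d = "\<lambda>i. iavg (fst i) (snd i) (\<lambda>z. u (z + w)) 0 - iavg (fst i) (snd i) u 0"
  have ev: "eventually (\<lambda>i. norm (?d i) \<le> 2 * B / real (snd i)) (theU :: ('g list \<times> nat) filter)"
    using eventually_theU_idx[of w 1] by (rule eventually_mono) (auto intro!: iavg_inv B)
  have "filterlim snd at_top (theU :: ('g list \<times> nat) filter)"
    unfolding filterlim_at_top
  proof
    fix Z :: nat
    show "eventually (\<lambda>i. Z \<le> snd i) (theU :: ('g list \<times> nat) filter)"
      using eventually_theU_idx[of w Z] by (rule eventually_mono) simp
  qed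
  from filterlim_compose[OF lim_const_over_n[of "2 * B"] this]
  have "((\<lambda>i. 2 * B / real (snd i)) \<longlongrightarrow> 0) (theU :: ('g list \<times> nat) filter)" by simp
  from Lim_null_comparison[OF ev this] have "(?d \<longlongrightarrow> 0) (theU :: ('g list \<times> nat) filter)" .
  from tendsto_add[OF this mean_tendsto[OF assms]]
  show ?thesis by (intro mean_eqI) simp
qed

subsection \<open>Time-frequency shifts\<close>

lemma tf_add: "tf_shift x \<xi> (\<lambda>\<phi>. f \<phi> + g \<phi>) = (\<lambda>\<phi>. tf_shift x \<xi> f \<phi> + tf_shift x \<xi> g \<phi>)"
  by (auto simp: tf_shift_def fun_eq_iff)

lemma tf_scale: "tf_shift x \<xi> (\<lambda>\<phi>. c * f \<phi>) = (\<lambda>\<phi>. c * tf_shift x \<xi> f \<phi>)"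
  by (auto simp: tf_shift_def fun_eq_iff)

lemma tf_zero:
  assumes "tempered f"
  shows "tf_shift 0 0 f = f"
proof
  fix \<phi> :: "'a testfun"
  show "tf_shift 0 0 f \<phi> = f \<phi>"
    using assms by (auto simp: tf_shift_def tempered_def)
qed

lemma exp_identity:
  fixes s x y \<xi> \<eta> :: "real^'d::finite"
  shows "exp (\<i> * complex_of_real (inner (s + y) \<eta>)) * exp (\<i> * complex_of_real (inner (s + y + x) \<xi>))
    = exp (- (\<i> * complex_of_real (inner x \<eta>))) * exp (\<i> * complex_of_real (inner (s + (x + y)) (\<xi> + \<eta>)))"
proof -
  have r: "inner (s + y) \<eta> + inner (s + y + x) \<xi> = - inner x \<eta> + inner (s + (x + y)) (\<xi> + \<eta>)"
    by (simp add: inner_add_left inner_add_right)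
  have "\<i> * complex_of_real (inner (s + y) \<eta>) + \<i> * complex_of_real (inner (s + y + x) \<xi>)
     = - (\<i> * complex_of_real (inner x \<eta>)) + \<i> * complex_of_real (inner (s + (x + y)) (\<xi> + \<eta>))"
  proof -
    have "\<i> * complex_of_real (inner (s + y) \<eta>) + \<i> * complex_of_real (inner (s + y + x) \<xi>)
        = \<i> * complex_of_real (inner (s + y) \<eta> + inner (s + y + x) \<xi>)"
      by (simp add: distrib_left)
    also have "\<dots> = \<i> * complex_of_real (- inner x \<eta> + inner (s + (x + y)) (\<xi> + \<eta>))"
      by (simp only: r)
    also have "\<dots> = - (\<i> * complex_of_real (inner x \<eta>)) + \<i> * complex_of_real (inner (s + (x + y)) (\<xi> + \<eta>))"
      by (simp add: algebra_simps)
    finally show ?thesis .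
  qed
  then show ?thesis by (simp only: exp_add[symmetric])
qed

lemma tf_comp:
  assumes "tempered f"
  shows "tf_shift x \<xi> (tf_shift y \<eta> f) =
    (\<lambda>\<phi>. exp (- (\<i> * complex_of_real (inner x \<eta>))) * tf_shift (x + y) (\<xi> + \<eta>) f \<phi>)"
proof
  fix \<phi> :: "'a testfun"
  show "tf_shift x \<xi> (tf_shift y \<eta> f) \<phi> =
    exp (- (\<i> * complex_of_real (inner x \<eta>))) * tf_shift (x + y) (\<xi> + \<eta>) f \<phi>"
  proof (cases "schwartz \<phi>")
    case False
    then show ?thesis by (simp add: tf_shift_def)
  next
    case True
    let ?c = "exp (- (\<i> * complex_of_real (inner x \<eta>)))"
    let ?\<psi> = "\<lambda>s. exp (\<i> * complex_of_real (inner (s + x) \<xi>)) * \<phi> (s + x)"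
    let ?\<chi> = "\<lambda>s. exp (\<i> * complex_of_real (inner (s + (x + y)) (\<xi> + \<eta>))) * \<phi> (s + (x + y))"
    have s1: "schwartz ?\<psi>" using schwartz_tf[OF True] .
    have s2: "schwartz ?\<chi>" using schwartz_tf[OF True] .
    have eqf: "(\<lambda>s. exp (\<i> * complex_of_real (inner (s + y) \<eta>)) * ?\<psi> (s + y)) = (\<lambda>s. ?c * ?\<chi> s)"
    proof
      fix s
      have "exp (\<i> * complex_of_real (inner (s + y) \<eta>)) * ?\<psi> (s + y) =
        (exp (\<i> * complex_of_real (inner (s + y) \<eta>)) * exp (\<i> * complex_of_real (inner (s + y + x) \<xi>)))
          * \<phi> (s + (x + y))"
        by (simp add: add_ac mult.assoc)
      also have "\<dots> = ?c * ?\<chi> s"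
        by (simp only: exp_identity mult.assoc)
      finally show "exp (\<i> * complex_of_real (inner (s + y) \<eta>)) * ?\<psi> (s + y) = ?c * ?\<chi> s" .
    qed
    have "tf_shift x \<xi> (tf_shift y \<eta> f) \<phi> = f (\<lambda>s. ?c * ?\<chi> s)"
      using True s1 by (simp add: tf_shift_def eqf)
    also have "\<dots> = ?c * f ?\<chi>"
      using assms s2 by (simp add: tempered_def)
    also have "\<dots> = ?c * tf_shift (x + y) (\<xi> + \<eta>) f \<phi>"
      using True by (simp add: tf_shift_def)
    finally show ?thesis .
  qed
qed

lemma ip_zero_left:
  assumes "inner_product_on H ip" "(\<lambda>\<phi>. 0) \<in> H" "h \<in> H"
  shows "ip (\<lambda>\<phi>. 0) h = 0"
proof -
  have ad: "\<And>f g h. f \<in> H \<Longrightarrow> g \<in> H \<Longrightarrow> h \<in> H \<Longrightarrow> ip (\<lambda>\<phi>. f \<phi> + g \<phi>) h = ip f h + ip g h"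
    using assms(1) unfolding inner_product_on_def by blast
  from ad[OF assms(2) assms(2) assms(3)] show ?thesis by simp
qed

lemma ip_real:
  assumes "inner_product_on H ip" "g \<in> H"
  shows "cnj (ip g g) = ip g g"
  using assms unfolding inner_product_on_def by metis

lemma ip_nonneg:
  assumes "inner_product_on H ip" "(\<lambda>\<phi>. 0) \<in> H" "h \<in> H"
  shows "0 \<le> Re (ip h h)"
proof (cases "h = (\<lambda>\<phi>. 0)")
  case True
  then show ?thesis using ip_zero_left[OF assms(1,2), of "\<lambda>\<phi>. 0"] assms by simp
next
  case False
  have "\<forall>f\<in>H. f \<noteq> (\<lambda>\<phi>. 0) \<longrightarrow> Re (ip f f) > 0"
    using assms(1) unfolding inner_product_on_def by blast
  then have "0 < Re (ip h h)" using False assms(3) by blast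
  then show ?thesis by simp
qed

lemma ip_norm_sq:
  assumes "inner_product_on H ip" "(\<lambda>\<phi>. 0) \<in> H" "h \<in> H"
  shows "(ip_norm ip h)\<^sup>2 = Re (ip h h)"
  using ip_nonneg[OF assms] by (simp add: ip_norm_def)

lemma ip_unit:
  assumes "inner_product_on H ip" "g \<in> H" "(\<lambda>\<phi>. c * g \<phi>) \<in> H" "norm c = 1"
  shows "ip (\<lambda>\<phi>. c * g \<phi>) (\<lambda>\<phi>. c * g \<phi>) = ip g g"
proof -
  have sc: "\<And>c f g. f \<in> H \<Longrightarrow> g \<in> H \<Longrightarrow> ip (\<lambda>\<phi>. c * f \<phi>) g = c * ip f g"
    and sy: "\<And>f g. f \<in> H \<Longrightarrow> g \<in> H \<Longrightarrow> ip g f = cnj (ip f g)"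
    using assms(1) unfolding inner_product_on_def by blast+
  have "ip (\<lambda>\<phi>. c * g \<phi>) (\<lambda>\<phi>. c * g \<phi>) = c * ip g (\<lambda>\<phi>. c * g \<phi>)"
    using sc assms by blast
  also have "ip g (\<lambda>\<phi>. c * g \<phi>) = cnj (ip (\<lambda>\<phi>. c * g \<phi>) g)"
    using sy assms by blast
  also have "ip (\<lambda>\<phi>. c * g \<phi>) g = c * ip g g"
    using sc assms by blast
  also have "c * cnj (c * ip g g) = (c * cnj c) * cnj (ip g g)" by simp
  also have "c * cnj c = 1"
    using complex_norm_square[of c] assms(4) by simp
  also have "cnj (ip g g) = ip g g" using ip_real assms by blast
  finally show ?thesis by simp
qed

lemma ip_bound:
  assumes ipH: "inner_product_on H ip" and zH: "(\<lambda>\<phi>. 0) \<in> H"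
    and addH: "\<forall>f\<in>H. \<forall>g\<in>H. (\<lambda>\<phi>. f \<phi> + g \<phi>) \<in> H"
    and scH: "\<forall>c. \<forall>f\<in>H. (\<lambda>\<phi>. c * f \<phi>) \<in> H"
    and a: "a \<in> H" and b: "b \<in> H"
  shows "norm (ip a b) \<le> Re (ip a a) + Re (ip b b)"
proof -
  have ad: "\<And>f g h. f \<in> H \<Longrightarrow> g \<in> H \<Longrightarrow> h \<in> H \<Longrightarrow> ip (\<lambda>\<phi>. f \<phi> + g \<phi>) h = ip f h + ip g h"
    and sc: "\<And>c f g. f \<in> H \<Longrightarrow> g \<in> H \<Longrightarrow> ip (\<lambda>\<phi>. c * f \<phi>) g = c * ip f g"
    and sy: "\<And>f g. f \<in> H \<Longrightarrow> g \<in> H \<Longrightarrow> ip g f = cnj (ip f g)"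
    using ipH unfolding inner_product_on_def by blast+
  have key: "Re (ip (\<lambda>\<phi>. a \<phi> + c * b \<phi>) (\<lambda>\<phi>. a \<phi> + c * b \<phi>)) =
      Re (ip a a) + Re (ip (\<lambda>\<phi>. c * b \<phi>) (\<lambda>\<phi>. c * b \<phi>)) + 2 * Re (c * cnj (ip a b))" for c
  proof -
    let ?cb = "\<lambda>\<phi>. c * b \<phi>"
    have cb: "?cb \<in> H" using scH b by blast
    have s: "(\<lambda>\<phi>. a \<phi> + ?cb \<phi>) \<in> H" using addH[rule_format, OF a cb] by simp
    have "ip (\<lambda>\<phi>. a \<phi> + ?cb \<phi>) (\<lambda>\<phi>. a \<phi> + ?cb \<phi>) = ip a (\<lambda>\<phi>. a \<phi> + ?cb \<phi>) + ip ?cb (\<lambda>\<phi>. a \<phi> + ?cb \<phi>)"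
      using ad a cb s by blast
    also have "ip a (\<lambda>\<phi>. a \<phi> + ?cb \<phi>) = cnj (ip a a + ip ?cb a)"
      using sy[OF a s] ad[OF a cb a] by simp
    also have "ip ?cb (\<lambda>\<phi>. a \<phi> + ?cb \<phi>) = cnj (ip a ?cb + ip ?cb ?cb)"
      using sy[OF cb s] ad[OF a cb cb] by simp
    also have "ip ?cb a = c * ip b a" using sc b a by blast
    also have "ip b a = cnj (ip a b)" using sy a b by blast
    also have "ip a ?cb = cnj (ip ?cb a)" using sy a cb by blast
    also have "ip ?cb a = c * cnj (ip a b)" using sc[OF b a] sy[OF a b] by simp
    finally have "ip (\<lambda>\<phi>. a \<phi> + ?cb \<phi>) (\<lambda>\<phi>. a \<phi> + ?cb \<phi>) =
       cnj (ip a a + c * cnj (ip a b)) + cnj (cnj (c * cnj (ip a b)) + ip ?cb ?cb)" .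
    then have "Re (ip (\<lambda>\<phi>. a \<phi> + ?cb \<phi>) (\<lambda>\<phi>. a \<phi> + ?cb \<phi>)) =
        Re (ip a a) + Re (c * cnj (ip a b)) + Re (c * cnj (ip a b)) + Re (ip ?cb ?cb)"
      by simp
    then show ?thesis by simp
  qed
  have qc: "Re (ip (\<lambda>\<phi>. c * b \<phi>) (\<lambda>\<phi>. c * b \<phi>)) = Re (ip b b)" if "norm c = 1" for c
    using ip_unit[OF ipH b scH[rule_format, OF b] that] by simp
  have nn: "0 \<le> Re (ip (\<lambda>\<phi>. a \<phi> + c * b \<phi>) (\<lambda>\<phi>. a \<phi> + c * b \<phi>))" for c
    using ip_nonneg[OF ipH zH addH[rule_format, OF a scH[rule_format, OF b]]] by simp
  define w where "w = ip a b"
  have "0 \<le> Re (ip a a) + Re (ip b b) + 2 * Re (c * cnj w)" if "norm c = 1" for c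
    using nn[of c] key[of c] qc[OF that] unfolding w_def by simp
  from this[of 1] this[of "-1"] this[of "\<i>"] this[of "-\<i>"]
  have h: "\<bar>Re w\<bar> * 2 \<le> Re (ip a a) + Re (ip b b)" "\<bar>Im w\<bar> * 2 \<le> Re (ip a a) + Re (ip b b)"
    by auto
  have "norm w \<le> \<bar>Re w\<bar> + \<bar>Im w\<bar>" by (rule cmod_le)
  with h show ?thesis unfolding w_def by linarith
qed

definition tfs :: "((real^'d) \<times> (real^'d)) \<Rightarrow> ('d::finite) distr \<Rightarrow> 'd distr" where
  "tfs z f = tf_shift (fst z) (snd z) f"

lemma tfs_comp:
  assumes "tempered f"
  shows "tfs z (tfs w f) = (\<lambda>\<phi>. exp (- (\<i> * complex_of_real (inner (fst z) (snd w)))) * tfs (z + w) f \<phi>)"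
  unfolding tfs_def using tf_comp[OF assms] by simp

theorem lemma2p2:
  fixes H :: "('d::finite) distr set"
    and ip :: "'d distr \<Rightarrow> 'd distr \<Rightarrow> complex"
    and C0 :: real
  assumes "hilbert_space_on H ip"
    and "H \<noteq> {(\<lambda>\<phi>. 0)}"
    and "cont_embedded_S' H ip"
    and "C0 \<ge> 1"
    and "\<forall>f\<in>H. \<forall>x \<xi>. tf_shift x \<xi> f \<in> H \<and>
            ip_norm ip (tf_shift x \<xi> f) \<le> C0 * ip_norm ip f"
  shows "\<exists>ip'. inner_product_on H ip' \<and>
           (\<exists>a b. 0 < a \<and> 0 < b \<and>
              (\<forall>f\<in>H. a * ip_norm ip f \<le> ip_norm ip' f \<and> ip_norm ip' f \<le> b * ip_norm ip f)) \<and>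
           (\<forall>f\<in>H. \<forall>x \<xi>. ip_norm ip' (tf_shift x \<xi> f) = ip_norm ip' f)"
proof -
  have zH: "(\<lambda>\<phi>. 0) \<in> H" and addH: "\<forall>f\<in>H. \<forall>g\<in>H. (\<lambda>\<phi>. f \<phi> + g \<phi>) \<in> H"
    and scH: "\<forall>c. \<forall>f\<in>H. (\<lambda>\<phi>. c * f \<phi>) \<in> H" and ipH: "inner_product_on H ip"
    using assms(1) unfolding hilbert_space_on_def by blast+
  have tempH: "\<And>f. f \<in> H \<Longrightarrow> tempered f"
    using assms(3) unfolding cont_embedded_S'_def by blast
  have ad: "\<And>f g h. f \<in> H \<Longrightarrow> g \<in> H \<Longrightarrow> h \<in> H \<Longrightarrow> ip (\<lambda>\<phi>. f \<phi> + g \<phi>) h = ip f h + ip g h"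
    and sc: "\<And>c f g. f \<in> H \<Longrightarrow> g \<in> H \<Longrightarrow> ip (\<lambda>\<phi>. c * f \<phi>) g = c * ip f g"
    and sy: "\<And>f g. f \<in> H \<Longrightarrow> g \<in> H \<Longrightarrow> ip g f = cnj (ip f g)"
    and ps: "\<And>f. f \<in> H \<Longrightarrow> f \<noteq> (\<lambda>\<phi>. 0) \<Longrightarrow> Re (ip f f) > 0"
    using ipH unfolding inner_product_on_def by blast+
  have C0: "0 < C0" using assms(4) by simp
  have T: "\<And>f z. f \<in> H \<Longrightarrow> tfs z f \<in> H"
    using assms(5) unfolding tfs_def by blast
  have Nb: "\<And>f z. f \<in> H \<Longrightarrow> ip_norm ip (tfs z f) \<le> C0 * ip_norm ip f"
    using assms(5) unfolding tfs_def by blast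
  have nn: "\<And>f. f \<in> H \<Longrightarrow> 0 \<le> ip_norm ip f" by (simp add: ip_norm_def ip_nonneg[OF ipH zH])
  have Q: "\<And>h. h \<in> H \<Longrightarrow> Re (ip h h) = (ip_norm ip h)\<^sup>2"
    using ip_norm_sq[OF ipH zH] by simp
  have Lo: "ip_norm ip f \<le> C0 * ip_norm ip (tfs z f)" if f: "f \<in> H" for f z
  proof -
    let ?c = "exp (- (\<i> * complex_of_real (inner (fst (- z)) (snd z))))"
    have "tfs (- z) (tfs z f) = (\<lambda>\<phi>. ?c * tfs (- z + z) f \<phi>)"
      using tfs_comp[OF tempH[OF f]] by simp
    also have "tfs (- z + z) f = f"
      using tf_zero[OF tempH[OF f]] by (simp add: tfs_def)
    finally have e: "tfs (- z) (tfs z f) = (\<lambda>\<phi>. ?c * f \<phi>)" .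
    have nc: "norm ?c = 1"
      by (metis mult_minus_right norm_exp_i_times of_real_minus)
    have "ip_norm ip (\<lambda>\<phi>. ?c * f \<phi>) = ip_norm ip f"
      unfolding ip_norm_def using ip_unit[OF ipH f _ nc] scH f by simp
    then have "ip_norm ip f = ip_norm ip (tfs (- z) (tfs z f))" by (simp add: e)
    also have "\<dots> \<le> C0 * ip_norm ip (tfs z f)" using Nb T f by blast
    finally show ?thesis .
  qed
  have Bd: "bdd_fun (\<lambda>z. ip (tfs z f) (tfs z g))" if f: "f \<in> H" and g: "g \<in> H" for f g
    unfolding bdd_fun_def
  proof (intro exI allI)
    fix z
    have "norm (ip (tfs z f) (tfs z g)) \<le> (ip_norm ip (tfs z f))\<^sup>2 + (ip_norm ip (tfs z g))\<^sup>2"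
      using ip_bound[OF ipH zH addH scH T[OF f] T[OF g]] Q T f g by simp
    also have "\<dots> \<le> (C0 * ip_norm ip f)\<^sup>2 + (C0 * ip_norm ip g)\<^sup>2"
      by (intro add_mono power_mono Nb f g nn T)
    finally show "norm (ip (tfs z f) (tfs z g)) \<le> (C0 * ip_norm ip f)\<^sup>2 + (C0 * ip_norm ip g)\<^sup>2" .
  qed
  define ip' where "ip' f g = mean (\<lambda>z::(real^'d) \<times> (real^'d). ip (tfs z f) (tfs z g))" for f g
  have Rf: "(ip_norm ip f)\<^sup>2 / C0\<^sup>2 \<le> Re (ip' f f) \<and> Re (ip' f f) \<le> C0\<^sup>2 * (ip_norm ip f)\<^sup>2"
    if f: "f \<in> H" for f
  proof -
    have R: "Re (ip' f f) = mean (\<lambda>z::(real^'d) \<times> (real^'d). Re (ip (tfs z f) (tfs z f)))"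
      unfolding ip'_def by (rule mean_linear[OF Bd[OF f f] bounded_linear_Re, symmetric])
    have bR: "bdd_fun (\<lambda>z::(real^'d) \<times> (real^'d). Re (ip (tfs z f) (tfs z f)))"
    proof -
      obtain B where B: "\<forall>z::(real^'d) \<times> (real^'d). cmod (ip (tfs z f) (tfs z f)) \<le> B"
        using Bd[OF f f] unfolding bdd_fun_def by blast
      show ?thesis unfolding bdd_fun_def real_norm_def
        by (rule exI[of _ B], rule allI) (meson B abs_Re_le_cmod order_trans)
    qed
    have lo: "(ip_norm ip f)\<^sup>2 / C0\<^sup>2 \<le> Re (ip (tfs z f) (tfs z f))" for z
    proof -
      have "ip_norm ip f / C0 \<le> ip_norm ip (tfs z f)"
        using Lo[OF f, of z] C0 by (simp add: field_simps)
      then have "(ip_norm ip f / C0)\<^sup>2 \<le> (ip_norm ip (tfs z f))\<^sup>2"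
        by (intro power_mono) (use nn[OF f] nn[OF T[OF f]] C0 in auto)
      then show ?thesis using Q T f by (simp add: power_divide)
    qed
    have up: "Re (ip (tfs z f) (tfs z f)) \<le> C0\<^sup>2 * (ip_norm ip f)\<^sup>2" for z
    proof -
      have "(ip_norm ip (tfs z f))\<^sup>2 \<le> (C0 * ip_norm ip f)\<^sup>2"
        by (intro power_mono Nb f nn T)
      then show ?thesis using Q T f by (simp add: power_mult_distrib)
    qed
    show ?thesis unfolding R using mean_lower[OF bR lo] mean_upper[OF bR up] by simp
  qed
  have inner': "inner_product_on H ip'"
    unfolding inner_product_on_def
  proof (intro conjI ballI allI impI)
    fix f g h assume f: "f \<in> H" and g: "g \<in> H" and h: "h \<in> H"
    have "ip' (\<lambda>\<phi>. f \<phi> + g \<phi>) h = mean (\<lambda>z::(real^'d) \<times> (real^'d).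
        ip (tfs z f) (tfs z h) + ip (tfs z g) (tfs z h))"
      unfolding ip'_def tfs_def tf_add using ad T f g h unfolding tfs_def by simp
    also have "\<dots> = ip' f h + ip' g h"
      unfolding ip'_def by (rule mean_add[OF Bd[OF f h] Bd[OF g h]])
    finally show "ip' (\<lambda>\<phi>. f \<phi> + g \<phi>) h = ip' f h + ip' g h" .
  next
    fix c f g assume f: "f \<in> H" and g: "g \<in> H"
    have "ip' (\<lambda>\<phi>. c * f \<phi>) g = mean (\<lambda>z::(real^'d) \<times> (real^'d). c * ip (tfs z f) (tfs z g))"
      unfolding ip'_def tfs_def tf_scale using sc T f g unfolding tfs_def by simp
    also have "\<dots> = c * ip' f g"
      unfolding ip'_def by (rule mean_linear[OF Bd[OF f g] bounded_linear_mult_right])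
    finally show "ip' (\<lambda>\<phi>. c * f \<phi>) g = c * ip' f g" .
  next
    fix f g assume f: "f \<in> H" and g: "g \<in> H"
    have "ip' g f = mean (\<lambda>z::(real^'d) \<times> (real^'d). cnj (ip (tfs z f) (tfs z g)))"
    proof -
      have "ip (tfs z g) (tfs z f) = cnj (ip (tfs z f) (tfs z g))" for z
        using sy T f g by blast
      then show ?thesis unfolding ip'_def by simp
    qed
    also have "\<dots> = cnj (ip' f g)"
      unfolding ip'_def by (rule mean_linear[OF Bd[OF f g] bounded_linear_cnj])
    finally show "ip' g f = cnj (ip' f g)" .
  next
    fix f assume f: "f \<in> H" and nz: "f \<noteq> (\<lambda>\<phi>. 0)"
    have "0 < Re (ip f f)" using ps f nz by blast
    then have "0 < (ip_norm ip f)\<^sup>2 / C0\<^sup>2" using Q f C0 by simp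
    then show "0 < Re (ip' f f)" using Rf[OF f] by linarith
  qed
  have equiv: "(1 / C0) * ip_norm ip f \<le> ip_norm ip' f \<and> ip_norm ip' f \<le> C0 * ip_norm ip f"
    if f: "f \<in> H" for f
  proof
    show "1 / C0 * ip_norm ip f \<le> ip_norm ip' f"
      unfolding ip_norm_def[of ip'] using Rf[OF f] by (intro real_le_rsqrt) (simp add: power_divide)
    show "ip_norm ip' f \<le> C0 * ip_norm ip f"
      unfolding ip_norm_def[of ip'] using Rf[OF f] C0 nn[OF f]
      by (intro real_le_lsqrt) (simp_all add: power_mult_distrib)
  qed
  have inv: "ip_norm ip' (tf_shift x \<xi> f) = ip_norm ip' f" if f: "f \<in> H" for f x \<xi>
  proof -
    define w :: "(real^'d) \<times> (real^'d)" where "w = (x, \<xi>)"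
    have tw: "tf_shift x \<xi> f = tfs w f" by (simp add: tfs_def w_def)
    have "ip (tfs z (tfs w f)) (tfs z (tfs w f)) = ip (tfs (z + w) f) (tfs (z + w) f)" for z
    proof -
      let ?c = "exp (- (\<i> * complex_of_real (inner (fst z) (snd w))))"
      have nc: "norm ?c = 1"
        by (metis mult_minus_right norm_exp_i_times of_real_minus)
      show ?thesis unfolding tfs_comp[OF tempH[OF f]]
        by (rule ip_unit[OF ipH T[OF f] _ nc]) (use scH T f in blast)
    qed
    then have "ip' (tfs w f) (tfs w f) = mean (\<lambda>z. ip (tfs (z + w) f) (tfs (z + w) f))"
      unfolding ip'_def by simp
    also have "\<dots> = ip' f f"
      unfolding ip'_def by (rule mean_shift[OF Bd[OF f f]])
    finally show ?thesis unfolding tw ip_norm_def by simp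
  qed
  have ex: "\<exists>a b. 0 < a \<and> 0 < b \<and>
              (\<forall>f\<in>H. a * ip_norm ip f \<le> ip_norm ip' f \<and> ip_norm ip' f \<le> b * ip_norm ip f)"
  proof (rule exI[of _ "1 / C0"], rule exI[of _ C0], intro conjI)
    show "0 < 1 / C0" using C0 by simp
    show "0 < C0" by (rule C0)
    show "\<forall>f\<in>H. 1 / C0 * ip_norm ip f \<le> ip_norm ip' f \<and> ip_norm ip' f \<le> C0 * ip_norm ip f"
    proof
      fix f assume f: "f \<in> H"
      show "1 / C0 * ip_norm ip f \<le> ip_norm ip' f \<and> ip_norm ip' f \<le> C0 * ip_norm ip f"
        by (rule equiv[OF f])
    qed
  qed
  have iv: "\<forall>f\<in>H. \<forall>x \<xi>. ip_norm ip' (tf_shift x \<xi> f) = ip_norm ip' f"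
    using inv by blast
  show ?thesis
    using inner' ex iv by blast
qed

end
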